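(* Let $\rho\in(0,1)$ and let $(\gamma_{n})_{n\in\mathbb{N}}$ be nonnegative integrable functions on $[0,\infty)$ with $\int_{0}^{\infty}\gamma_{n}(t)dt\le\rho$ for all $n$. For $\theta\le\rho-1-\log\rho$ let $x(\theta)$ be the minimal real solution of $x=\theta+(e^{x}-1)\rho$. For a measurable function $t\mapsto f(t,\theta)$ on $[0,\infty)$ define $$F_{n}(t,\theta):=\theta+\int_{0}^{t}\left(e^{f(t-s,\theta)}-1\right)\gamma_{n}(s)\,ds,\qquad t\ge0.$$ (a) If $0\le\theta\le\rho-1-\log\rho$ and $f(t,\theta)\le x(\theta)$ for all $t\ge0$, then $F_{n}(t,\theta)\le x(\theta)$ for all $t\ge0$ and $n\in\mathbb{N}$. (b) If $\theta\le0$ and $f(t,\theta)\ge x(\theta)$ for all $t\ge0$, then $F_{n}(t,\theta)\ge x(\theta)$ for all $t\ge0$ and $n\in\mathbb{N}$. *)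

theory Defs
  imports "HOL-Analysis.Analysis"
begin

definition xmin :: "real \<Rightarrow> real \<Rightarrow> real" where
  "xmin \<rho> \<theta> = (LEAST x. x = \<theta> + (exp x - 1) * \<rho>)"

definition Fn :: "(nat \<Rightarrow> real \<Rightarrow> real) \<Rightarrow> (real \<Rightarrow> real \<Rightarrow> real) \<Rightarrow> nat \<Rightarrow> real \<Rightarrow> real \<Rightarrow> real" where
  "Fn \<gamma> f n t \<theta> = \<theta> + (LINT s:{0..t}|lborel. (exp (f (t - s) \<theta>) - 1) * \<gamma> n s)"

end

theory Submission
  imports Defs
begin

lemma xmin_props:
  fixes \<rho> \<theta> :: real
  assumes \<rho>: "0 < \<rho>" "\<rho> < 1" and \<theta>_dom: "\<theta> \<le> \<rho> - 1 - ln \<rho>"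
  shows "xmin \<rho> \<theta> = \<theta> + (exp (xmin \<rho> \<theta>) - 1) * \<rho>"
    and "\<And>y. y = \<theta> + (exp y - 1) * \<rho> \<Longrightarrow> xmin \<rho> \<theta> \<le> y"
proof -
  define g where "g y = \<theta> + (exp y - 1) * \<rho> - y" for y
  have cont: "continuous_on A g" for A unfolding g_def by (intro continuous_intros)
  have low: "g y > \<theta> - \<rho> - y" for y
    using \<rho> by (simp add: g_def algebra_simps)
  define Z where "Z = {y. g y = 0}"
  have "g (- ln \<rho>) = \<theta> + 1 - \<rho> + ln \<rho>"
    using \<rho> by (simp add: g_def exp_minus exp_ln field_simps)
  hence g1: "g (- ln \<rho>) \<le> 0" using \<theta>_dom by simp
  have g0: "g (\<theta> - \<rho> - 1) \<ge> 0" using low[of "\<theta> - \<rho> - 1"] by simp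
  have le: "\<theta> - \<rho> - 1 \<le> - ln \<rho>"
  proof (rule ccontr)
    assume "\<not> ?thesis"
    hence "- ln \<rho> < \<theta> - \<rho> - 1" by simp
    with low[of "- ln \<rho>"] g1 show False by linarith
  qed
  obtain z where z: "g z = 0"
    using IVT2'[of g "- ln \<rho>" 0 "\<theta> - \<rho> - 1", OF g1 g0 le cont] by auto
  have ne: "Z \<noteq> {}" using z Z_def by auto
  have bdd: "bdd_below Z"
    unfolding bdd_below_def Z_def
  proof (rule exI[of _ "\<theta> - \<rho>"], intro ballI)
    fix y assume "y \<in> {y. g y = 0}"
    thus "\<theta> - \<rho> \<le> y" using low[of y] by simp
  qed
  have cl: "closed Z" unfolding Z_def
    using continuous_closed_vimage[of "{0}" g] cont[of UNIV]
    by (simp add: vimage_def continuous_on_eq_continuous_within)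
  have inZ: "Inf Z \<in> Z" using closed_contains_Inf[OF ne bdd cl] .
  have eq: "xmin \<rho> \<theta> = Inf Z"
    unfolding xmin_def
  proof (rule Least_equality)
    show "Inf Z = \<theta> + (exp (Inf Z) - 1) * \<rho>" using inZ by (simp add: Z_def g_def)
    fix y assume "y = \<theta> + (exp y - 1) * \<rho>"
    hence "y \<in> Z" by (simp add: Z_def g_def)
    thus "Inf Z \<le> y" using bdd by (simp add: cInf_lower)
  qed
  show "xmin \<rho> \<theta> = \<theta> + (exp (xmin \<rho> \<theta>) - 1) * \<rho>" using inZ eq by (simp add: Z_def g_def)
  fix y assume "y = \<theta> + (exp y - 1) * \<rho>"
  hence "y \<in> Z" by (simp add: Z_def g_def)
  thus "xmin \<rho> \<theta> \<le> y" using bdd eq by (simp add: cInf_lower)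
qed

theorem lemma4p6:
  fixes \<rho> \<theta> :: real and \<gamma> :: "nat \<Rightarrow> real \<Rightarrow> real" and f :: "real \<Rightarrow> real \<Rightarrow> real"
  assumes \<rho>: "0 < \<rho>" "\<rho> < 1"
    and \<gamma>_nonneg: "\<And>n s. 0 \<le> s \<Longrightarrow> 0 \<le> \<gamma> n s"
    and \<gamma>_int: "\<And>n. set_integrable lborel {0..} (\<gamma> n)"
    and \<gamma>_bound: "\<And>n. (LINT s:{0..}|lborel. \<gamma> n s) \<le> \<rho>"
    and \<theta>_dom: "\<theta> \<le> \<rho> - 1 - ln \<rho>"
    and f_meas: "set_borel_measurable lborel {0..} (\<lambda>t. f t \<theta>)"
  shows "(0 \<le> \<theta> \<and> (\<forall>t\<ge>0. f t \<theta> \<le> xmin \<rho> \<theta>) \<longrightarrow>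
            (\<forall>n t. 0 \<le> t \<longrightarrow> Fn \<gamma> f n t \<theta> \<le> xmin \<rho> \<theta>))
       \<and> (\<theta> \<le> 0 \<and> (\<forall>t\<ge>0. f t \<theta> \<ge> xmin \<rho> \<theta>) \<longrightarrow>
            (\<forall>n t. 0 \<le> t \<longrightarrow> Fn \<gamma> f n t \<theta> \<ge> xmin \<rho> \<theta>))"
proof -
  define x where "x = xmin \<rho> \<theta>"
  have xeq: "x = \<theta> + (exp x - 1) * \<rho>" using xmin_props(1)[OF \<rho> \<theta>_dom] x_def by simp
  have xmin: "\<And>y. y = \<theta> + (exp y - 1) * \<rho> \<Longrightarrow> x \<le> y" using xmin_props(2)[OF \<rho> \<theta>_dom] x_def by simp
  have gS_int: "set_integrable lborel {0..t} (\<gamma> n)" if "0 \<le> t" for n t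
    by (rule set_integrable_subset[OF \<gamma>_int]) auto
  have gS_nonneg: "0 \<le> (LINT s:{0..t}|lborel. \<gamma> n s)" for n t
    unfolding set_lebesgue_integral_def
    by (rule integral_nonneg_AE) (auto simp: indicator_def intro!: \<gamma>_nonneg)
  have gS_le: "(LINT s:{0..t}|lborel. \<gamma> n s) \<le> \<rho>" if "0 \<le> t" for n t
  proof -
    have u: "{0..} = {0..t} \<union> {t<..}" using that by auto
    have i2: "set_integrable lborel {t<..} (\<gamma> n)"
      by (rule set_integrable_subset[OF \<gamma>_int]) (use that in auto)
    have "(LINT s:{0..}|lborel. \<gamma> n s) = (LINT s:{0..t}|lborel. \<gamma> n s) + (LINT s:{t<..}|lborel. \<gamma> n s)"
      by (subst u, rule set_integral_Un) (auto intro: gS_int[OF that] i2)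
    moreover have "0 \<le> (LINT s:{t<..}|lborel. \<gamma> n s)"
      unfolding set_lebesgue_integral_def
      by (rule integral_nonneg_AE) (use that in \<open>auto simp: indicator_def intro!: \<gamma>_nonneg\<close>)
    ultimately show ?thesis using \<gamma>_bound[of n] by linarith
  qed
  have A: "Fn \<gamma> f n t \<theta> \<le> x" if th: "0 \<le> \<theta>" and fb: "\<forall>t\<ge>0. f t \<theta> \<le> x" and t: "0 \<le> t" for n t
  proof -
    have x0: "0 \<le> x"
    proof (rule ccontr)
      assume "\<not> ?thesis" hence "x < 0" by simp
      have "exp x - 1 \<ge> x" using exp_ge_add_one_self[of x] by linarith
      hence "(exp x - 1) * \<rho> \<ge> x * \<rho>" using \<rho> by (simp add: mult_right_mono)
      moreover have "x * \<rho> > x" using \<open>x < 0\<close> \<rho> by (simp add: mult_less_cancel_left_neg)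
      ultimately show False using xeq th by linarith
    qed
    have c0: "0 \<le> exp x - 1" using x0 by simp
    let ?I = "LINT s:{0..t}|lborel. (exp (f (t - s) \<theta>) - 1) * \<gamma> n s"
    have "?I \<le> (exp x - 1) * \<rho>"
    proof (cases "set_integrable lborel {0..t} (\<lambda>s. (exp (f (t - s) \<theta>) - 1) * \<gamma> n s)")
      case True
      have "?I \<le> (LINT s:{0..t}|lborel. (exp x - 1) * \<gamma> n s)"
      proof (rule set_integral_mono[OF True])
        show "set_integrable lborel {0..t} (\<lambda>s. (exp x - 1) * \<gamma> n s)"
          using gS_int[OF t] by auto
        fix s assume s: "s \<in> {0..t}"
        have "f (t - s) \<theta> \<le> x" using fb s by auto
        hence "exp (f (t - s) \<theta>) - 1 \<le> exp x - 1" by simp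
        thus "(exp (f (t - s) \<theta>) - 1) * \<gamma> n s \<le> (exp x - 1) * \<gamma> n s"
          using \<gamma>_nonneg[of s n] s by (simp add: mult_right_mono)
      qed
      also have "\<dots> = (exp x - 1) * (LINT s:{0..t}|lborel. \<gamma> n s)" by simp
      also have "\<dots> \<le> (exp x - 1) * \<rho>" using gS_le[OF t] c0 by (simp add: mult_left_mono)
      finally show ?thesis .
    next
      case False
      hence "?I = 0" unfolding set_lebesgue_integral_def set_integrable_def
        by (simp add: not_integrable_integral_eq)
      thus ?thesis using c0 \<rho> by simp
    qed
    thus ?thesis unfolding Fn_def using xeq by linarith
  qed
  have B: "Fn \<gamma> f n t \<theta> \<ge> x" if th: "\<theta> \<le> 0" and fb: "\<forall>t\<ge>0. f t \<theta> \<ge> x" and t: "0 \<le> t" for n t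
  proof -
    define g where "g y = \<theta> + (exp y - 1) * \<rho> - y" for y
    have cont: "continuous_on A g" for A unfolding g_def by (intro continuous_intros)
    have "g (\<theta> - \<rho> - 1) > 0" using \<rho> by (simp add: g_def algebra_simps add_pos_nonneg)
    moreover have "g 0 \<le> 0" using th by (simp add: g_def)
    moreover have "\<theta> - \<rho> - 1 \<le> 0" using th \<rho> by simp
    ultimately obtain z where z: "z \<le> 0" "g z = 0"
      using IVT2'[of g 0 0 "\<theta> - \<rho> - 1", OF _ _ _ cont] by force
    have "x \<le> z" using xmin[of z] z by (simp add: g_def)
    hence x0: "x \<le> 0" using z by simp
    have c0: "exp x - 1 \<le> 0" using x0 by simp
    let ?I = "LINT s:{0..t}|lborel. (exp (f (t - s) \<theta>) - 1) * \<gamma> n s"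
    have "?I \<ge> (exp x - 1) * \<rho>"
    proof (cases "set_integrable lborel {0..t} (\<lambda>s. (exp (f (t - s) \<theta>) - 1) * \<gamma> n s)")
      case True
      have "(exp x - 1) * \<rho> \<le> (exp x - 1) * (LINT s:{0..t}|lborel. \<gamma> n s)"
        using gS_le[OF t] c0 by (simp add: mult_left_mono_neg)
      also have "\<dots> = (LINT s:{0..t}|lborel. (exp x - 1) * \<gamma> n s)" by simp
      also have "\<dots> \<le> ?I"
      proof (rule set_integral_mono[OF _ True])
        show "set_integrable lborel {0..t} (\<lambda>s. (exp x - 1) * \<gamma> n s)"
          using gS_int[OF t] by auto
        fix s assume s: "s \<in> {0..t}"
        have "f (t - s) \<theta> \<ge> x" using fb s by auto
        hence "exp (f (t - s) \<theta>) - 1 \<ge> exp x - 1" by simp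
        thus "(exp x - 1) * \<gamma> n s \<le> (exp (f (t - s) \<theta>) - 1) * \<gamma> n s"
          using \<gamma>_nonneg[of s n] s by (simp add: mult_right_mono)
      qed
      finally show ?thesis .
    next
      case False
      hence "?I = 0" unfolding set_lebesgue_integral_def set_integrable_def
        by (simp add: not_integrable_integral_eq)
      thus ?thesis using c0 \<rho> by (simp add: mult_nonpos_nonneg)
    qed
    thus ?thesis unfolding Fn_def using xeq by linarith
  qed
  show ?thesis using A B unfolding x_def by blast
qed

end
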